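(* Let $(\Omega,\mathcal{F},P)=([0,1],\mathcal{B}([0,1]),\lambda)$ with $\lambda$ Lebesgue measure. Let $(\varepsilon_n)\subset(0,1)$ be a sequence with $\varepsilon_n\to0$ and, for each $n$, let $S^n_t=0$ for $t\in[0,1)$ and $S^n_1(\omega)=-\frac{1}{\sqrt{\omega}}$ for $\omega\in[0,\varepsilon_n)$, $S^n_1(\omega)=\frac{1}{(1-\omega)^{1/(n+1)}}$ for $\omega\in[\varepsilon_n,1]$, where $(\varepsilon_n)$ is chosen such that $E[S^n_1]=1$ for all $n$. Consider the filtration generated by $(S^n)_{n\in\mathbb{N}}$ (so that predictable strategies are deterministic and the terminal value of a portfolio in the first $n$ assets has the form $\sum_{k=1}^n c_kS^k_1$ with constants $c_k\in\mathbb{R}$). Then: (1) for $n\in\mathbb{N}$ and $c_1,\dots,c_n\in\mathbb{R}$ such that $X_1=\sum_{k=1}^nc_kS^k_1\ge-1$ a.s., one has $\sum_{k\in G_+}c_k\le\sum_{k\in G_-}|c_k|$, where $G_+=\{j:c_j>0\}$, $G_-=\{j:c_j<0\}$; (2) $P=\lambda$ is a separating measure for $\mathcal{X}$, i.e. $E_P[X_1]\le0$ for all $X\in\mathcal{X}$.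
   Context: For this market, $\mathcal{X}^n_1$ denotes the set of stochastic integrals $(\mathbf{H}\bullet\mathbf{S}^n)$, $\mathbf{S}^n=(S^1,\dots,S^n)$, with $\mathbf{H}$ $\mathbb{R}^n$-valued predictable $\mathbf{S}^n$-integrable and $(\mathbf{H}\bullet\mathbf{S}^n)_t\ge-1$ for all $t$; $\mathcal{X}_1$ is the closure of $\bigcup_{n\ge1}\mathcal{X}^n_1$ in the Emery topology (metric $d_{\mathbb{S}}(X,Y)=\sup_{K}E[\sup_{t\le1}|(K\bullet(X-Y))_t|\wedge1]$ over simple predictable $K$, $\|K\|_\infty\le1$), and $\mathcal{X}=\bigcup_{\lambda>0}\lambda\mathcal{X}_1$. *)

theory Defs
  imports "HOL-Probability.Probability"
begin

definition PP :: "real measure" where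
  "PP = restrict_space lborel {0..1}"

text \<open>Terminal value S^n_1 of the n-th asset (n \<ge> 1); S^n_t = 0 for t < 1.\<close>
definition S :: "(nat \<Rightarrow> real) \<Rightarrow> nat \<Rightarrow> real \<Rightarrow> real" where
  "S eps n \<omega> = (if \<omega> < eps n then - 1 / sqrt \<omega>
                  else 1 / ((1 - \<omega>) powr (1 / (real n + 1))))"

definition port :: "(nat \<Rightarrow> real) \<Rightarrow> nat \<Rightarrow> (nat \<Rightarrow> real) \<Rightarrow> real \<Rightarrow> real" where
  "port eps n c \<omega> = (\<Sum>k\<in>{1..n}. c k * S eps k \<omega>)"

text \<open>X^n_1: (terminal values of) 1-admissible stochastic integrals in the first n assets.
  Since all processes vanish on [0,1), a process is identified with its terminal value.\<close>
definition Xn1 :: "(nat \<Rightarrow> real) \<Rightarrow> nat \<Rightarrow> (real \<Rightarrow> real) set" where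
  "Xn1 eps n = {port eps n c | c. AE \<omega> in PP. port eps n c \<omega> \<ge> -1}"

text \<open>Emery distance between processes that vanish on [0,1) and jump at time 1:
  simple predictable integrands act at time 1 as deterministic constants a with |a| \<le> 1.\<close>
definition dS :: "(real \<Rightarrow> real) \<Rightarrow> (real \<Rightarrow> real) \<Rightarrow> real" where
  "dS X Y = (SUP a\<in>{-1..1}. \<integral>\<omega>. min \<bar>a * (X \<omega> - Y \<omega>)\<bar> 1 \<partial>PP)"

definition X1 :: "(nat \<Rightarrow> real) \<Rightarrow> (real \<Rightarrow> real) set" where
  "X1 eps = {X \<in> borel_measurable PP. \<exists>Y :: nat \<Rightarrow> real \<Rightarrow> real.
              (\<forall>j. Y j \<in> (\<Union>n\<in>{1..}. Xn1 eps n)) \<and> (\<lambda>j. dS (Y j) X) \<longlonglongrightarrow> 0}"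

definition Xcal :: "(nat \<Rightarrow> real) \<Rightarrow> (real \<Rightarrow> real) set" where
  "Xcal eps = {(\<lambda>\<omega>. l * X \<omega>) | l X. l > 0 \<and> X \<in> X1 eps}"

end

theory Submission
  imports Defs
begin

lemma space_PP: "space PP = {0..1}"
  by (simp add: PP_def space_restrict_space)

lemma prob_PP: "prob_space PP"
proof
  have "emeasure PP {0..1} = emeasure lborel {0..1::real}"
    unfolding PP_def by (rule emeasure_restrict_space) auto
  then show "emeasure PP (space PP) = 1" by (simp add: space_PP)
qed

lemma fin_PP: "finite_measure PP"
  using prob_PP by (simp add: prob_space_def)

lemma part1_sum:
  fixes eps :: "nat \<Rightarrow> real"
  assumes eps_range: "\<And>n. n \<ge> 1 \<Longrightarrow> 0 < eps n \<and> eps n < 1"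
    and n: "n \<ge> 1" and ae: "AE \<omega> in PP. port eps n c \<omega> \<ge> -1"
  shows "(\<Sum>k\<in>{1..n}. c k) \<le> 0"
proof (rule ccontr)
  define s where "s = (\<Sum>k\<in>{1..n}. c k)"
  assume "\<not> (\<Sum>k\<in>{1..n}. c k) \<le> 0"
  then have s: "s > 0" by (simp add: s_def)
  define m where "m = Min (eps ` {1..n})"
  have m: "m > 0" unfolding m_def using n eps_range by (subst Min_gr_iff) auto
  have mle: "\<And>k. k \<in> {1..n} \<Longrightarrow> m \<le> eps k" unfolding m_def by simp
  define d where "d = min (min m (s^2)) 1"
  have d: "d > 0" using m s by (simp add: d_def)
  have bad: "port eps n c w < -1" if w: "0 < w" "w < d" for w
  proof -
    have "\<And>k. k \<in> {1..n} \<Longrightarrow> S eps k w = - 1 / sqrt w"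
      using mle w by (force simp: S_def d_def)
    then have "port eps n c w = (\<Sum>k\<in>{1..n}. c k * (- 1 / sqrt w))"
      unfolding port_def by simp
    also have "\<dots> = - s / sqrt w" by (simp add: s_def sum_divide_distrib sum_negf)
    finally have eq: "port eps n c w = - s / sqrt w" .
    have sw: "sqrt w > 0" using w by simp
    have "sqrt w < sqrt (s^2)" using w by (simp only: real_sqrt_less_iff) (simp add: d_def)
    then have "sqrt w < s" using s by simp
    then have "s / sqrt w > 1" using sw by simp
    then show ?thesis using eq by simp
  qed
  have "AE w in lborel. w \<in> {0..1} \<longrightarrow> port eps n c w \<ge> -1"
    using ae unfolding PP_def by (subst (asm) AE_restrict_space_iff) auto
  then have "AE w in lborel. w \<notin> {0<..<d}"
    by eventually_elim (use bad d in \<open>force simp: d_def\<close>)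
  then have "emeasure lborel {0<..<d} = 0"
    by (subst (asm) AE_iff_measurable[of "{0<..<d}"]) auto
  then show False using d by simp
qed

lemma port_int:
  fixes eps :: "nat \<Rightarrow> real"
  assumes mean_one: "\<And>n. n \<ge> 1 \<Longrightarrow> integrable PP (S eps n) \<and> (\<integral>\<omega>. S eps n \<omega> \<partial>PP) = 1"
  shows "integrable PP (port eps n c) \<and> (\<integral>\<omega>. port eps n c \<omega> \<partial>PP) = (\<Sum>k\<in>{1..n}. c k)"
proof -
  have i: "\<And>k. k \<in> {1..n} \<Longrightarrow> integrable PP (\<lambda>\<omega>. c k * S eps k \<omega>)"
    using mean_one by auto
  have "integrable PP (\<lambda>\<omega>. \<Sum>k\<in>{1..n}. c k * S eps k \<omega>)"
    by (rule Bochner_Integration.integrable_sum) (rule i)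
  moreover have "(\<integral>\<omega>. (\<Sum>k\<in>{1..n}. c k * S eps k \<omega>) \<partial>PP) = (\<Sum>k\<in>{1..n}. c k)"
    using i mean_one by (subst Bochner_Integration.integral_sum) (auto intro!: sum.cong)
  ultimately show ?thesis unfolding port_def[abs_def] by simp
qed

lemma lip: "(M::real) \<ge> 0 \<Longrightarrow> \<bar>max (min y M) (-1) - max (min x M) (-1)\<bar> \<le> (M+1) * min \<bar>y - x\<bar> 1"
proof -
  assume M: "M \<ge> 0"
  have a: "\<bar>max (min y M) (-1) - max (min x M) (-1)\<bar> \<le> \<bar>y - x\<bar>" by (auto simp: abs_if)
  have b: "\<bar>max (min y M) (-1) - max (min x M) (-1)\<bar> \<le> M + 1" using M by (auto simp: abs_if)
  show ?thesis
  proof (cases "\<bar>y - x\<bar> \<le> 1")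
    case True
    have "\<bar>y - x\<bar> \<le> (M+1) * \<bar>y - x\<bar>" using M mult_right_mono[of 1 "M+1" "\<bar>y - x\<bar>"] by simp
    then show ?thesis using a True by simp
  next
    case False then show ?thesis using b by simp
  qed
qed

lemma split_f: "(M::real) \<ge> 0 \<Longrightarrow> max (min x M) (-1) = min (max x 0) M - min (max (-x) 0) 1"
  by auto

lemma int_le1:
  assumes "\<And>x. h x \<le> (1::real)"
  shows "(\<integral>x. h x \<partial>PP) \<le> 1"
proof (cases "integrable PP h")
  case True
  interpret prob_space PP by (rule prob_PP)
  have "(\<integral>x. h x \<partial>PP) \<le> (\<integral>x. 1 \<partial>PP)"
    using True assms by (intro integral_mono) auto
  then show ?thesis by (simp add: prob_space)
next
  case False then show ?thesis by (simp add: not_integrable_integral_eq)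
qed

lemma dS_ge:
  assumes "X \<in> borel_measurable PP" "Y \<in> borel_measurable PP"
  shows "(\<integral>\<omega>. min \<bar>Y \<omega> - X \<omega>\<bar> 1 \<partial>PP) \<le> dS Y X"
proof -
  have "(\<integral>\<omega>. min \<bar>1 * (Y \<omega> - X \<omega>)\<bar> 1 \<partial>PP) \<le> dS Y X"
    unfolding dS_def
    by (rule cSUP_upper) (auto intro!: bdd_aboveI2[where M=1] int_le1)
  then show ?thesis by simp
qed

lemma stepA:
  fixes eps :: "nat \<Rightarrow> real"
  assumes eps_range: "\<And>n. n \<ge> 1 \<Longrightarrow> 0 < eps n \<and> eps n < 1"
    and mean_one: "\<And>n. n \<ge> 1 \<Longrightarrow> integrable PP (S eps n) \<and> (\<integral>\<omega>. S eps n \<omega> \<partial>PP) = 1"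
    and Xm[measurable]: "X \<in> borel_measurable PP"
    and Y: "Y \<in> Xn1 eps n" and n: "n \<ge> 1" and M: "(M::real) \<ge> 0"
  shows "(\<integral>\<omega>. max (min (X \<omega>) M) (-1) \<partial>PP) \<le> (M+1) * dS Y X"
proof -
  interpret finite_measure PP by (rule fin_PP)
  obtain c where Yc: "Y = port eps n c" and ae: "AE \<omega> in PP. port eps n c \<omega> \<ge> -1"
    using Y unfolding Xn1_def by auto
  have Yi: "integrable PP Y" and EY: "(\<integral>\<omega>. Y \<omega> \<partial>PP) \<le> 0"
    using port_int[OF mean_one, of n c] part1_sum[OF eps_range n ae] Yc by auto
  have Ym[measurable]: "Y \<in> borel_measurable PP" using Yi by (rule borel_measurable_integrable)
  have iX: "integrable PP (\<lambda>\<omega>. max (min (X \<omega>) M) (-1))"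
    by (rule integrable_const_bound[where B="M+1"]) (use M in auto)
  have iY: "integrable PP (\<lambda>\<omega>. max (min (Y \<omega>) M) (-1))"
    by (rule integrable_const_bound[where B="M+1"]) (use M in auto)
  have iD: "integrable PP (\<lambda>\<omega>. min \<bar>Y \<omega> - X \<omega>\<bar> 1)"
    by (rule integrable_const_bound[where B="1"]) auto
  have "(\<integral>\<omega>. max (min (X \<omega>) M) (-1) \<partial>PP) - (\<integral>\<omega>. max (min (Y \<omega>) M) (-1) \<partial>PP)
      = (\<integral>\<omega>. max (min (X \<omega>) M) (-1) - max (min (Y \<omega>) M) (-1) \<partial>PP)"
    using iX iY by simp
  also have "\<dots> \<le> (\<integral>\<omega>. (M+1) * min \<bar>Y \<omega> - X \<omega>\<bar> 1 \<partial>PP)"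
  proof (rule integral_mono)
    show "integrable PP (\<lambda>\<omega>. max (min (X \<omega>) M) (-1) - max (min (Y \<omega>) M) (-1))" using iX iY by simp
    show "integrable PP (\<lambda>\<omega>. (M+1) * min \<bar>Y \<omega> - X \<omega>\<bar> 1)" using iD by simp
    fix w
    have "\<bar>max (min (Y w) M) (-1) - max (min (X w) M) (-1)\<bar> \<le> (M+1) * min \<bar>Y w - X w\<bar> 1"
      by (rule lip[OF M])
    then show "max (min (X w) M) (-1) - max (min (Y w) M) (-1) \<le> (M+1) * min \<bar>Y w - X w\<bar> 1"
      by (smt (verit))
  qed
  also have "\<dots> = (M+1) * (\<integral>\<omega>. min \<bar>Y \<omega> - X \<omega>\<bar> 1 \<partial>PP)" by simp
  also have "\<dots> \<le> (M+1) * dS Y X"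
    using dS_ge[OF Xm Ym] M by (intro mult_left_mono) auto
  finally have 1: "(\<integral>\<omega>. max (min (X \<omega>) M) (-1) \<partial>PP) - (\<integral>\<omega>. max (min (Y \<omega>) M) (-1) \<partial>PP) \<le> (M+1) * dS Y X" .
  have "(\<integral>\<omega>. max (min (Y \<omega>) M) (-1) \<partial>PP) \<le> (\<integral>\<omega>. Y \<omega> \<partial>PP)"
    using iY Yi by (rule integral_mono_AE) (use ae Yc in \<open>auto elim!: eventually_mono\<close>)
  then show ?thesis using 1 EY by linarith
qed

lemma stepB:
  fixes eps :: "nat \<Rightarrow> real"
  assumes eps_range: "\<And>n. n \<ge> 1 \<Longrightarrow> 0 < eps n \<and> eps n < 1"
    and mean_one: "\<And>n. n \<ge> 1 \<Longrightarrow> integrable PP (S eps n) \<and> (\<integral>\<omega>. S eps n \<omega> \<partial>PP) = 1"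
    and X: "X \<in> X1 eps"
  shows "(\<integral>\<^sup>+\<omega>. ennreal (X \<omega>) \<partial>PP) \<le> (\<integral>\<^sup>+\<omega>. ennreal (- X \<omega>) \<partial>PP)"
proof -
  interpret finite_measure PP by (rule fin_PP)
  obtain Y where Xm[measurable]: "X \<in> borel_measurable PP" and Y: "\<And>j. Y j \<in> (\<Union>n\<in>{1..}. Xn1 eps n)"
    and lim: "(\<lambda>j. dS (Y j) X) \<longlonglongrightarrow> 0"
    using X unfolding X1_def by auto
  have A: "(\<integral>\<omega>. max (min (X \<omega>) M) (-1) \<partial>PP) \<le> 0" if M: "M \<ge> 0" for M :: real
  proof (rule LIMSEQ_le_const)
    show "(\<lambda>j. (M+1) * dS (Y j) X) \<longlonglongrightarrow> 0"
      using tendsto_mult_right_zero[OF lim, of "M+1"] by simp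
    show "\<exists>N. \<forall>j\<ge>N. (\<integral>\<omega>. max (min (X \<omega>) M) (-1) \<partial>PP) \<le> (M+1) * dS (Y j) X"
    proof (intro exI allI impI)
      fix j
      obtain n where "n \<ge> 1" "Y j \<in> Xn1 eps n" using Y[of j] by auto
      then show "(\<integral>\<omega>. max (min (X \<omega>) M) (-1) \<partial>PP) \<le> (M+1) * dS (Y j) X"
        using stepA[OF eps_range mean_one Xm _ _ M] by blast
    qed
  qed
  have B: "(\<integral>\<^sup>+\<omega>. ennreal (min (max (X \<omega>) 0) M) \<partial>PP) \<le> (\<integral>\<^sup>+\<omega>. ennreal (- X \<omega>) \<partial>PP)"
    if M: "M \<ge> 0" for M :: real
  proof -
    have i1: "integrable PP (\<lambda>\<omega>. min (max (X \<omega>) 0) M)"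
      by (rule integrable_const_bound[where B="M"]) (use M in auto)
    have i2: "integrable PP (\<lambda>\<omega>. min (max (- X \<omega>) 0) 1)"
      by (rule integrable_const_bound[where B="1"]) auto
    have "(\<integral>\<omega>. max (min (X \<omega>) M) (-1) \<partial>PP)
        = (\<integral>\<omega>. min (max (X \<omega>) 0) M - min (max (- X \<omega>) 0) 1 \<partial>PP)"
      using split_f[OF M] by simp
    also have "\<dots> = (\<integral>\<omega>. min (max (X \<omega>) 0) M \<partial>PP) - (\<integral>\<omega>. min (max (- X \<omega>) 0) 1 \<partial>PP)"
      using i1 i2 by simp
    finally have le: "(\<integral>\<omega>. min (max (X \<omega>) 0) M \<partial>PP) \<le> (\<integral>\<omega>. min (max (- X \<omega>) 0) 1 \<partial>PP)"
      using A[OF M] by simp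
    have "(\<integral>\<^sup>+\<omega>. ennreal (min (max (X \<omega>) 0) M) \<partial>PP) = ennreal (\<integral>\<omega>. min (max (X \<omega>) 0) M \<partial>PP)"
      using i1 M by (intro nn_integral_eq_integral) auto
    also have "\<dots> \<le> ennreal (\<integral>\<omega>. min (max (- X \<omega>) 0) 1 \<partial>PP)"
      using le by (rule ennreal_leI)
    also have "\<dots> = (\<integral>\<^sup>+\<omega>. ennreal (min (max (- X \<omega>) 0) 1) \<partial>PP)"
      using i2 by (intro nn_integral_eq_integral[symmetric]) auto
    also have "\<dots> \<le> (\<integral>\<^sup>+\<omega>. ennreal (- X \<omega>) \<partial>PP)"
    proof (intro nn_integral_mono)
      fix x
      show "ennreal (min (max (- X x) 0) 1) \<le> ennreal (- X x)"
        by (cases "X x \<le> 0") (auto simp: ennreal_neg intro!: ennreal_leI)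
    qed
    finally show ?thesis .
  qed
  have sup: "ennreal (X \<omega>) = (SUP i. ennreal (min (max (X \<omega>) 0) (real i)))" for \<omega>
  proof (rule antisym)
    obtain i :: nat where "max (X \<omega>) 0 \<le> real i" using real_arch_simple by blast
    then have "ennreal (X \<omega>) \<le> ennreal (min (max (X \<omega>) 0) (real i))"
      by (intro ennreal_leI) auto
    then show "ennreal (X \<omega>) \<le> (SUP i. ennreal (min (max (X \<omega>) 0) (real i)))"
      by (rule SUP_upper2[OF UNIV_I])
    show "(SUP i. ennreal (min (max (X \<omega>) 0) (real i))) \<le> ennreal (X \<omega>)"
    proof (rule SUP_least)
      fix i :: nat
      show "ennreal (min (max (X \<omega>) 0) (real i)) \<le> ennreal (X \<omega>)"
        by (cases "X \<omega> \<le> 0") (auto simp: ennreal_neg intro!: ennreal_leI)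
    qed
  qed
  have "(\<integral>\<^sup>+\<omega>. ennreal (X \<omega>) \<partial>PP) = (\<integral>\<^sup>+\<omega>. (SUP i. ennreal (min (max (X \<omega>) 0) (real i))) \<partial>PP)"
    by (simp only: sup[symmetric])
  also have "\<dots> = (SUP i. (\<integral>\<^sup>+\<omega>. ennreal (min (max (X \<omega>) 0) (real i)) \<partial>PP))"
    by (rule nn_integral_monotone_convergence_SUP) (auto simp: incseq_def le_fun_def intro!: ennreal_leI)
  also have "\<dots> \<le> (\<integral>\<^sup>+\<omega>. ennreal (- X \<omega>) \<partial>PP)"
    by (rule SUP_least) (rule B, simp)
  finally show ?thesis .
qed

theorem lemma6p2:
  fixes eps :: "nat \<Rightarrow> real"
  assumes eps_range: "\<And>n. n \<ge> 1 \<Longrightarrow> 0 < eps n \<and> eps n < 1"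
    and eps_lim: "eps \<longlonglongrightarrow> 0"
    and mean_one: "\<And>n. n \<ge> 1 \<Longrightarrow> integrable PP (S eps n) \<and> (\<integral>\<omega>. S eps n \<omega> \<partial>PP) = 1"
  shows "(\<forall>n c. n \<ge> 1 \<longrightarrow> (AE \<omega> in PP. port eps n c \<omega> \<ge> -1) \<longrightarrow>
            (\<Sum>k\<in>{k\<in>{1..n}. c k > 0}. c k) \<le> (\<Sum>k\<in>{k\<in>{1..n}. c k < 0}. \<bar>c k\<bar>))
       \<and> (\<forall>X\<in>Xcal eps. (\<integral>\<^sup>+\<omega>. ennreal (X \<omega>) \<partial>PP) \<le> (\<integral>\<^sup>+\<omega>. ennreal (- X \<omega>) \<partial>PP))"
proof (intro conjI allI impI ballI)
  fix n c assume n: "n \<ge> (1::nat)" and ae: "AE \<omega> in PP. port eps n c \<omega> \<ge> -1"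
  have s: "(\<Sum>k\<in>{1..n}. c k) \<le> 0" by (rule part1_sum[OF eps_range n ae])
  have e1: "{1..n} \<inter> {k. c k > 0} = {k\<in>{1..n}. c k > 0}" "{1..n} - {k. c k > 0} = {k\<in>{1..n}. \<not> c k > 0}"
    by auto
  have "(\<Sum>k\<in>{1..n}. c k) = (\<Sum>k\<in>{k\<in>{1..n}. c k > 0}. c k) + (\<Sum>k\<in>{k\<in>{1..n}. \<not> c k > 0}. c k)"
    using sum.Int_Diff[of "{1..n}" c "{k. c k > 0}"] unfolding e1 by simp
  also have "(\<Sum>k\<in>{k\<in>{1..n}. \<not> c k > 0}. c k) = (\<Sum>k\<in>{k\<in>{1..n}. c k < 0}. c k)"
    by (rule sum.mono_neutral_right) auto
  also have "\<dots> = - (\<Sum>k\<in>{k\<in>{1..n}. c k < 0}. \<bar>c k\<bar>)"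
    by (simp add: sum_negf[symmetric])
  finally show "(\<Sum>k\<in>{k\<in>{1..n}. c k > 0}. c k) \<le> (\<Sum>k\<in>{k\<in>{1..n}. c k < 0}. \<bar>c k\<bar>)"
    using s by linarith
next
  fix Z assume "Z \<in> Xcal eps"
  then obtain l X where Z: "Z = (\<lambda>\<omega>. l * X \<omega>)" and l: "l > 0" and X: "X \<in> X1 eps"
    unfolding Xcal_def by auto
  have Xm: "X \<in> borel_measurable PP" using X unfolding X1_def by auto
  have "(\<integral>\<^sup>+\<omega>. ennreal (Z \<omega>) \<partial>PP) = ennreal l * (\<integral>\<^sup>+\<omega>. ennreal (X \<omega>) \<partial>PP)"
    unfolding Z using l Xm by (simp add: ennreal_mult' nn_integral_cmult)
  also have "\<dots> \<le> ennreal l * (\<integral>\<^sup>+\<omega>. ennreal (- X \<omega>) \<partial>PP)"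
    by (intro mult_left_mono stepB[OF eps_range mean_one X]) auto
  also have "\<dots> = (\<integral>\<^sup>+\<omega>. ennreal (- Z \<omega>) \<partial>PP)"
    unfolding Z using l Xm by (simp add: ennreal_mult'[symmetric] nn_integral_cmult[symmetric])
  finally show "(\<integral>\<^sup>+\<omega>. ennreal (Z \<omega>) \<partial>PP) \<le> (\<integral>\<^sup>+\<omega>. ennreal (- Z \<omega>) \<partial>PP)" .
qed

end
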